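(* Let $\mathsf{T}$ be a rooted plane tree, let $\delta\in\mathsf{Pop}(\mathcal{O}(\mathsf{T}))$, let $v\in\mathsf{T}$, and let $u\in M_\delta(v)$. Then $\delta(u)=\{u\}$. Moreover, if $w$ is a child of $v$ with $w\in\delta(v)$ and $u\in\Delta_{\delta(v)}(w)$, then for every integer $k\geq 1$ such that $w\in\mathsf{Pop}^k(\delta)(v)$, the set $\{u\}$ is a bead of the $w$-section of $\mathsf{Pop}^k(\delta)(v)$ in $\mathsf{Pop}^k(\delta)$.
   Context: A rooted plane tree $\mathsf{T}$ is a finite tree with a distinguished root, regarded as a poset $\leq_\mathsf{T}$ in which $v'\leq_\mathsf{T} v$ iff $v$ lies on the path from $v'$ to the root; children of $v$ are nodes covered by $v$. For a set $S$ of nodes and a node $u$, $\Delta_S(u)=\{x\in S:x\leq_\mathsf{T} u\}$. An ornament is a nonempty set of nodes inducing a connected subgraph; an ornamentation is a map $\delta$ from nodes to ornaments such that the unique maximal element of $\delta(v)$ is $v$ and any two sets $\delta(v),\delta(v')$ are nested or disjoint. $\mathcal{O}(\mathsf{T})$ is the set of ornamentations ordered by pointwise inclusion (a lattice with meet given by pointwise intersection); $\mathsf{Pop}(\delta)=\bigwedge(\{\delta\}\cup\{\delta':\delta'\lessdot\delta\})$ and $\mathsf{Pop}^k$ is its $k$-th iterate. For distinct nodes $u,v$, $v$ wraps $u$ in $\delta$ if $\delta(u)\subseteq\delta(v)$ and there is no node $x$ with $\delta(u)\subsetneq\delta(x)\subsetneq\delta(v)$; the reduction of $\delta(v)$ by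 such $u$ is $\delta(v)\setminus\Delta_{\delta(v)}(u)$; a minimal reduction is a reduction not properly contained in another reduction of $\delta(v)$; $M_\delta(v)$ is the set of nodes $u$ wrapped by $v$ such that the reduction of $\delta(v)$ by $u$ is minimal. For an ornamentation $\sigma$, a node $v$ and a child $v'$ of $v$ with $v'\in\sigma(v)$, the $v'$-section of $\sigma(v)$ is $\Delta_{\sigma(v)}(v')$. An ornament $\sigma(x)$ is a bead of this $v'$-section in $\sigma$ if $x\leq_\mathsf{T} v'$, $x\notin\sigma(v)$, and for every node $y$ on the path from $v'$ to $x$ (endpoints included), either $y\in\sigma(v)$ or $\sigma(y)=\{y\}$. *)

theory Defs
  imports Main
begin

text \<open>A rooted (plane) tree on the finite node set V with root r, given by a parent
  map par (par r = r). The planar order of children plays no role in the notions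
  below, so it is not recorded.\<close>

definition rooted_tree :: "'a set \<Rightarrow> 'a \<Rightarrow> ('a \<Rightarrow> 'a) \<Rightarrow> bool" where
  "rooted_tree V r par \<longleftrightarrow> finite V \<and> r \<in> V \<and> par r = r \<and>
     (\<forall>v\<in>V. par v \<in> V) \<and> (\<forall>v\<in>V. \<exists>n. (par ^^ n) v = r)"

definition tle :: "'a set \<Rightarrow> ('a \<Rightarrow> 'a) \<Rightarrow> 'a \<Rightarrow> 'a \<Rightarrow> bool" where
  "tle V par x y \<longleftrightarrow> x \<in> V \<and> y \<in> V \<and> (\<exists>n. (par ^^ n) x = y)"

definition child :: "'a set \<Rightarrow> 'a \<Rightarrow> ('a \<Rightarrow> 'a) \<Rightarrow> 'a \<Rightarrow> 'a \<Rightarrow> bool" where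
  "child V r par c v \<longleftrightarrow> c \<in> V \<and> v \<in> V \<and> c \<noteq> r \<and> par c = v"

definition Delta :: "'a set \<Rightarrow> ('a \<Rightarrow> 'a) \<Rightarrow> 'a set \<Rightarrow> 'a \<Rightarrow> 'a set" where
  "Delta V par S u = {x \<in> S. tle V par x u}"

definition adj :: "'a set \<Rightarrow> 'a \<Rightarrow> ('a \<Rightarrow> 'a) \<Rightarrow> 'a \<Rightarrow> 'a \<Rightarrow> bool" where
  "adj V r par x y \<longleftrightarrow> child V r par x y \<or> child V r par y x"

definition ornament :: "'a set \<Rightarrow> 'a \<Rightarrow> ('a \<Rightarrow> 'a) \<Rightarrow> 'a set \<Rightarrow> bool" where
  "ornament V r par S \<longleftrightarrow> S \<noteq> {} \<and> S \<subseteq> V \<and>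
     (\<forall>x\<in>S. \<forall>y\<in>S. (\<lambda>a b. a \<in> S \<and> b \<in> S \<and> adj V r par a b)\<^sup>*\<^sup>* x y)"

text \<open>Ornamentations; we fix the value {} outside V so that pointwise inclusion on V
  is the function order.\<close>
definition ornamentation :: "'a set \<Rightarrow> 'a \<Rightarrow> ('a \<Rightarrow> 'a) \<Rightarrow> ('a \<Rightarrow> 'a set) \<Rightarrow> bool" where
  "ornamentation V r par \<delta> \<longleftrightarrow>
     (\<forall>v. v \<notin> V \<longrightarrow> \<delta> v = {}) \<and>
     (\<forall>v\<in>V. ornament V r par (\<delta> v) \<and> v \<in> \<delta> v \<and>
        (\<forall>x\<in>\<delta> v. tle V par x v) \<and> (\<forall>x\<in>\<delta> v. (\<forall>y\<in>\<delta> v. tle V par y x) \<longrightarrow> x = v)) \<and>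
     (\<forall>v\<in>V. \<forall>v'\<in>V. \<delta> v \<subseteq> \<delta> v' \<or> \<delta> v' \<subseteq> \<delta> v \<or> \<delta> v \<inter> \<delta> v' = {})"

definition orn_le :: "'a set \<Rightarrow> ('a \<Rightarrow> 'a set) \<Rightarrow> ('a \<Rightarrow> 'a set) \<Rightarrow> bool" where
  "orn_le V \<delta>' \<delta> \<longleftrightarrow> (\<forall>v\<in>V. \<delta>' v \<subseteq> \<delta> v)"

definition orn_covered :: "'a set \<Rightarrow> 'a \<Rightarrow> ('a \<Rightarrow> 'a) \<Rightarrow> ('a \<Rightarrow> 'a set) \<Rightarrow> ('a \<Rightarrow> 'a set) \<Rightarrow> bool" where
  "orn_covered V r par \<delta>' \<delta> \<longleftrightarrow>
     ornamentation V r par \<delta>' \<and> ornamentation V r par \<delta> \<and>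
     orn_le V \<delta>' \<delta> \<and> \<delta>' \<noteq> \<delta> \<and>
     \<not> (\<exists>\<gamma>. ornamentation V r par \<gamma> \<and> orn_le V \<delta>' \<gamma> \<and> orn_le V \<gamma> \<delta> \<and> \<gamma> \<noteq> \<delta>' \<and> \<gamma> \<noteq> \<delta>)"

text \<open>Pop: meet (pointwise intersection) of \<delta> and its lower covers.\<close>
definition Pop :: "'a set \<Rightarrow> 'a \<Rightarrow> ('a \<Rightarrow> 'a) \<Rightarrow> ('a \<Rightarrow> 'a set) \<Rightarrow> ('a \<Rightarrow> 'a set)" where
  "Pop V r par \<delta> = (\<lambda>v. \<delta> v \<inter> (\<Inter>\<delta>'\<in>{\<delta>'. orn_covered V r par \<delta>' \<delta>}. \<delta>' v))"

definition wraps :: "'a set \<Rightarrow> ('a \<Rightarrow> 'a set) \<Rightarrow> 'a \<Rightarrow> 'a \<Rightarrow> bool" where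
  "wraps V \<delta> v u \<longleftrightarrow> u \<in> V \<and> v \<in> V \<and> u \<noteq> v \<and> \<delta> u \<subseteq> \<delta> v \<and>
     \<not> (\<exists>x\<in>V. \<delta> u \<subset> \<delta> x \<and> \<delta> x \<subset> \<delta> v)"

definition reduction :: "'a set \<Rightarrow> ('a \<Rightarrow> 'a) \<Rightarrow> ('a \<Rightarrow> 'a set) \<Rightarrow> 'a \<Rightarrow> 'a \<Rightarrow> 'a set" where
  "reduction V par \<delta> v u = \<delta> v - Delta V par (\<delta> v) u"

definition Mset :: "'a set \<Rightarrow> ('a \<Rightarrow> 'a) \<Rightarrow> ('a \<Rightarrow> 'a set) \<Rightarrow> 'a \<Rightarrow> 'a set" where
  "Mset V par \<delta> v = {u. wraps V \<delta> v u \<and>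
     \<not> (\<exists>u'. wraps V \<delta> v u' \<and> reduction V par \<delta> v u \<subset> reduction V par \<delta> v u')}"

definition is_bead :: "'a set \<Rightarrow> 'a \<Rightarrow> ('a \<Rightarrow> 'a) \<Rightarrow> ('a \<Rightarrow> 'a set) \<Rightarrow> 'a \<Rightarrow> 'a \<Rightarrow> 'a set \<Rightarrow> bool" where
  "is_bead V r par \<sigma> v v' S \<longleftrightarrow> child V r par v' v \<and> v' \<in> \<sigma> v \<and>
     (\<exists>x\<in>V. S = \<sigma> x \<and> tle V par x v' \<and> x \<notin> \<sigma> v \<and>
        (\<forall>y. tle V par x y \<and> tle V par y v' \<longrightarrow> y \<in> \<sigma> v \<or> \<sigma> y = {y}))"

end

theory Submission
  imports Defs
begin


locale rtree =
  fixes V :: "'a set" and r :: 'a and par :: "'a \<Rightarrow> 'a"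
  assumes rt: "rooted_tree V r par"
begin

abbreviation le :: "'a \<Rightarrow> 'a \<Rightarrow> bool" where "le x y \<equiv> tle V par x y"
abbreviation orn :: "('a \<Rightarrow> 'a set) \<Rightarrow> bool" where "orn d \<equiv> ornamentation V r par d"

lemma finV: "finite V" using rt unfolding rooted_tree_def by auto
lemma rV: "r \<in> V" using rt unfolding rooted_tree_def by auto
lemma par_r: "par r = r" using rt unfolding rooted_tree_def by auto
lemma parV: "x \<in> V \<Longrightarrow> par x \<in> V" using rt unfolding rooted_tree_def by auto
lemma reach: "x \<in> V \<Longrightarrow> \<exists>n. (par ^^ n) x = r" using rt unfolding rooted_tree_def by auto

lemma funpowV: "x \<in> V \<Longrightarrow> (par ^^ n) x \<in> V"
  by (induction n) (auto simp: parV)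

lemma funpow_r: "(par ^^ n) r = r"
  by (induction n) (auto simp: par_r)

lemma funpow_ge: assumes "(par ^^ n) x = r" "n \<le> m" shows "(par ^^ m) x = r"
proof -
  have "(par ^^ m) x = (par ^^ (m - n)) ((par ^^ n) x)"
    using assms(2) by (metis funpow_add le_add_diff_inverse2 o_apply)
  then show ?thesis using assms(1) funpow_r by simp
qed

lemma funpow_cycle: assumes "(par ^^ k) x = x" shows "(par ^^ (k * j)) x = x"
proof (induction j)
  case 0 then show ?case by simp
next
  case (Suc j)
  have "(par ^^ (k * Suc j)) x = (par ^^ k) ((par ^^ (k*j)) x)"
    by (simp add: funpow_add)
  then show ?case using Suc assms by simp
qed

lemma tle_refl: "x \<in> V \<Longrightarrow> le x x"
  unfolding tle_def by (auto intro: exI[of _ 0])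

lemma tle_V: "le x y \<Longrightarrow> x \<in> V \<and> y \<in> V"
  unfolding tle_def by auto

lemma tle_trans: "le x y \<Longrightarrow> le y z \<Longrightarrow> le x z"
  unfolding tle_def by (metis funpow_add o_apply)

lemma tle_antisym: assumes "le x y" "le y x" shows "x = y"
proof -
  obtain n k where n: "(par ^^ n) x = y" and k: "(par ^^ k) y = x" and xV: "x \<in> V"
    using assms unfolding tle_def by auto
  have c: "(par ^^ (k + n)) x = x" using n k by (simp add: funpow_add)
  show ?thesis
  proof (cases "k + n = 0")
    case True then show ?thesis using n by simp
  next
    case False
    obtain N where N: "(par ^^ N) x = r" using reach xV by auto
    have "N \<le> (k+n) * N" using False by (cases "k+n") auto
    then have "(par ^^ ((k+n) * N)) x = r" using funpow_ge[OF N] by blast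
    moreover have "(par ^^ ((k+n) * N)) x = x" using funpow_cycle[OF c] .
    ultimately have "x = r" by simp
    then show ?thesis using n funpow_r by simp
  qed
qed

lemma tle_par: "x \<in> V \<Longrightarrow> le x (par x)"
  unfolding tle_def by (auto simp: parV intro: exI[of _ 1])

lemma tle_lin: assumes "le z a" "le z b" shows "le a b \<or> le b a"
proof -
  obtain i j where i: "(par ^^ i) z = a" and j: "(par ^^ j) z = b" and V: "a \<in> V" "b \<in> V"
    using assms unfolding tle_def by auto
  show ?thesis
  proof (cases "i \<le> j")
    case True
    then have "(par ^^ (j - i)) a = b" using i j by (metis funpow_add le_add_diff_inverse2 o_apply)
    then show ?thesis using V unfolding tle_def by auto
  next
    case False
    then have "(par ^^ (i - j)) b = a" using i j
      by (metis funpow_add le_add_diff_inverse2 o_apply nat_le_linear)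
    then show ?thesis using V unfolding tle_def by auto
  qed
qed

lemma tle_par_step: assumes "le z b" "z \<noteq> b" shows "le (par z) b"
proof -
  obtain i where i: "(par ^^ i) z = b" and V: "z \<in> V" "b \<in> V"
    using assms unfolding tle_def by auto
  then obtain i' where "i = Suc i'" using assms(2) by (cases i) auto
  then have "(par ^^ i') (par z) = b" using i by (metis funpow_Suc_right o_apply)
  then show ?thesis using V parV unfolding tle_def by auto
qed

lemma tle_r: "x \<in> V \<Longrightarrow> le x r"
  using reach rV unfolding tle_def by auto

lemma orn_pc:
  assumes S: "ornament V r par S" and x: "x \<in> S" and a: "a \<in> S" and ab: "le a b" and bx: "le b x"
  shows "b \<in> S"
proof -
  let ?R = "\<lambda>a b. a \<in> S \<and> b \<in> S \<and> adj V r par a b"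
  have w: "?R\<^sup>*\<^sup>* a x" using S a x unfolding ornament_def by blast
  have "(le z b \<and> z \<noteq> b) \<or> b \<in> S" if "?R\<^sup>*\<^sup>* a z" for z
    using that
  proof (induction rule: rtranclp_induct)
    case base then show ?case using ab a by auto
  next
    case (step y z)
    show ?case
    proof (cases "b \<in> S")
      case True then show ?thesis by simp
    next
      case False
      with step.IH have yb: "le y b" "y \<noteq> b" by auto
      from step.hyps(2) have zS: "z \<in> S" and "adj V r par y z" by auto
      then consider "child V r par y z" | "child V r par z y" unfolding adj_def by blast
      then show ?thesis
      proof cases
        case 1
        then have "par y = z" unfolding child_def by auto
        then have "le z b" using tle_par_step[OF yb] by simp
        then show ?thesis using zS by auto
      next
        case 2
        then have "par z = y" "z \<in> V" unfolding child_def by auto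
        then have zy: "le z y" using tle_par by metis
        then have "le z b" using yb tle_trans by blast
        moreover have "z \<noteq> b" using zy yb tle_antisym by blast
        ultimately show ?thesis by simp
      qed
    qed
  qed
  from this[OF w] show ?thesis using bx tle_antisym by blast
qed

lemma orn_mk:
  assumes SV: "S \<subseteq> V" and x: "x \<in> S" and below: "\<forall>a\<in>S. le a x"
    and pc: "\<forall>a b. a \<in> S \<longrightarrow> le a b \<longrightarrow> le b x \<longrightarrow> b \<in> S"
  shows "ornament V r par S"
proof -
  let ?R = "\<lambda>a b. a \<in> S \<and> b \<in> S \<and> adj V r par a b"
  have up: "\<forall>a. (par ^^ n) a = x \<longrightarrow> a \<in> S \<longrightarrow> ?R\<^sup>*\<^sup>* a x" for n
  proof (induction n)
    case 0 then show ?case by auto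
  next
    case (Suc n)
    show ?case
    proof (intro allI impI)
      fix a assume ax: "(par ^^ Suc n) a = x" and aS: "a \<in> S"
      show "?R\<^sup>*\<^sup>* a x"
      proof (cases "a = x")
        case True then show ?thesis by simp
      next
        case False
        have aV: "a \<in> V" using aS SV by auto
        have ar: "a \<noteq> r"
        proof
          assume "a = r" then have "x = r" using ax funpow_r by metis
          then show False using False \<open>a = r\<close> by simp
        qed
        have lax: "le a x" using below aS by auto
        have "le (par a) x" using tle_par_step[OF lax False] .
        moreover have "le a (par a)" using tle_par[OF aV] .
        ultimately have paS: "par a \<in> S" using pc aS by blast
        have st: "?R a (par a)" using aS paS aV parV ar unfolding adj_def child_def by auto
        have "(par ^^ n) (par a) = x" using ax by (metis funpow_Suc_right o_apply)
        then have rest: "?R\<^sup>*\<^sup>* (par a) x" using Suc.IH paS by blast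
        show ?thesis by (rule converse_rtranclp_into_rtranclp[OF st rest])
      qed
    qed
  qed
  have tox: "?R\<^sup>*\<^sup>* a x" if aS: "a \<in> S" for a
  proof -
    obtain n where "(par ^^ n) a = x" using below aS unfolding tle_def by auto
    then show ?thesis using up aS by blast
  qed
  have sym: "symp ?R" unfolding symp_def adj_def by auto
  have "?R\<^sup>*\<^sup>* a b" if "a \<in> S" "b \<in> S" for a b
  proof -
    have "?R\<^sup>*\<^sup>* x b" using tox[OF that(2)] sym by (meson sympD symp_rtranclp)
    then show ?thesis using tox[OF that(1)] by (meson rtranclp_trans)
  qed
  then show ?thesis unfolding ornament_def using SV x by blast
qed

lemma orn_out: "orn d \<Longrightarrow> v \<notin> V \<Longrightarrow> d v = {}"
  unfolding ornamentation_def by auto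
lemma orn_self: "orn d \<Longrightarrow> v \<in> V \<Longrightarrow> v \<in> d v"
  unfolding ornamentation_def by auto
lemma orn_below: "orn d \<Longrightarrow> x \<in> d v \<Longrightarrow> le x v"
  unfolding ornamentation_def by (cases "v \<in> V") auto
lemma orn_V: "orn d \<Longrightarrow> x \<in> d v \<Longrightarrow> x \<in> V"
  using orn_below tle_V by blast
lemma orn_vV: "orn d \<Longrightarrow> x \<in> d v \<Longrightarrow> v \<in> V"
  using orn_below tle_V by blast
lemma orn_nest: "orn d \<Longrightarrow> v \<in> V \<Longrightarrow> v' \<in> V \<Longrightarrow> d v \<subseteq> d v' \<or> d v' \<subseteq> d v \<or> d v \<inter> d v' = {}"
  unfolding ornamentation_def by blast
lemma orn_pc2: "orn d \<Longrightarrow> a \<in> d x \<Longrightarrow> le a b \<Longrightarrow> le b x \<Longrightarrow> b \<in> d x"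
proof -
  assume d: "orn d" and a: "a \<in> d x" and ab: "le a b" and bx: "le b x"
  have xV: "x \<in> V" using orn_vV d a by blast
  have "ornament V r par (d x)" using d xV unfolding ornamentation_def by blast
  then show ?thesis using orn_pc[of "d x" x a b] orn_self[OF d xV] a ab bx by blast
qed
lemma orn_sub_mem: assumes "orn d" "x \<in> d y" shows "d x \<subseteq> d y"
proof -
  have V: "x \<in> V" "y \<in> V" using assms orn_V orn_vV by blast+
  have "x \<in> d x" using orn_self assms V by blast
  then consider "d x \<subseteq> d y" | "d y \<subseteq> d x" using orn_nest[OF assms(1) V] assms(2) by blast
  then show ?thesis
  proof cases
    case 2
    then have "y \<in> d x" using orn_self assms V by blast
    then have "x = y" using orn_below assms tle_antisym by blast
    then show ?thesis by simp
  qed simp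
qed

lemma orn_intro:
  assumes out: "\<forall>v. v \<notin> V \<longrightarrow> d v = {}"
    and sub: "\<forall>v\<in>V. d v \<subseteq> V" and self: "\<forall>v\<in>V. v \<in> d v"
    and bel: "\<forall>v\<in>V. \<forall>a\<in>d v. le a v"
    and pc: "\<forall>v\<in>V. \<forall>a b. a \<in> d v \<longrightarrow> le a b \<longrightarrow> le b v \<longrightarrow> b \<in> d v"
    and nest: "\<forall>v\<in>V. \<forall>v'\<in>V. d v \<subseteq> d v' \<or> d v' \<subseteq> d v \<or> d v \<inter> d v' = {}"
  shows "orn d"
proof -
  have "ornament V r par (d v)" if "v \<in> V" for v
    using orn_mk[of "d v" v] sub self bel pc that by blast
  moreover have "x = v" if "v \<in> V" "x \<in> d v" "\<forall>y\<in>d v. le y x" for v x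
    using that self bel tle_antisym by blast
  ultimately show ?thesis unfolding ornamentation_def using out self bel nest by blast
qed

lemma orn_int:
  assumes F: "F \<noteq> {}" "\<forall>f\<in>F. orn f"
  shows "orn (\<lambda>v. \<Inter>f\<in>F. f v)"
proof (rule orn_intro)
  obtain f0 where f0: "f0 \<in> F" using F by auto
  have o0: "orn f0" using f0 F by blast
  show "\<forall>v. v \<notin> V \<longrightarrow> (\<Inter>f\<in>F. f v) = {}" using f0 orn_out[OF o0] by blast
  show "\<forall>v\<in>V. (\<Inter>f\<in>F. f v) \<subseteq> V" using f0 orn_V[OF o0] by blast
  show "\<forall>v\<in>V. v \<in> (\<Inter>f\<in>F. f v)" using F(2) orn_self by blast
  show "\<forall>v\<in>V. \<forall>a\<in>(\<Inter>f\<in>F. f v). le a v" using f0 orn_below[OF o0] by blast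
  show "\<forall>v\<in>V. \<forall>a b. a \<in> (\<Inter>f\<in>F. f v) \<longrightarrow> le a b \<longrightarrow> le b v \<longrightarrow> b \<in> (\<Inter>f\<in>F. f v)"
  proof (intro ballI allI impI INT_I)
    fix v a b f assume "v \<in> V" "a \<in> (\<Inter>f\<in>F. f v)" "le a b" "le b v" "f \<in> F"
    then show "b \<in> f v" using orn_pc2[of f a v b] F(2) by blast
  qed
  show "\<forall>v\<in>V. \<forall>v'\<in>V. (\<Inter>f\<in>F. f v) \<subseteq> (\<Inter>f\<in>F. f v') \<or> (\<Inter>f\<in>F. f v') \<subseteq> (\<Inter>f\<in>F. f v) \<or>
    (\<Inter>f\<in>F. f v) \<inter> (\<Inter>f\<in>F. f v') = {}"
  proof (intro ballI)
    fix v v' assume vV: "v \<in> V" "v' \<in> V"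
    have key: "(\<Inter>f\<in>F. f a) \<subseteq> (\<Inter>f\<in>F. f b)" if "z \<in> (\<Inter>f\<in>F. f a)" "z \<in> (\<Inter>f\<in>F. f b)" "le a b" for a b z
    proof -
      have "f a \<subseteq> f b" if f: "f \<in> F" for f
      proof -
        have of: "orn f" using f F by blast
        have "z \<in> f a" "z \<in> f b" using that f \<open>z \<in> (\<Inter>f\<in>F. f a)\<close> \<open>z \<in> (\<Inter>f\<in>F. f b)\<close> by auto
        then have "le z a" using orn_below[OF of] by blast
        then have "a \<in> f b" using orn_pc2[OF of \<open>z \<in> f b\<close>] \<open>le a b\<close> by blast
        then show ?thesis using orn_sub_mem[OF of] by blast
      qed
      then show ?thesis by blast
    qed
    show "(\<Inter>f\<in>F. f v) \<subseteq> (\<Inter>f\<in>F. f v') \<or> (\<Inter>f\<in>F. f v') \<subseteq> (\<Inter>f\<in>F. f v) \<or>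
      (\<Inter>f\<in>F. f v) \<inter> (\<Inter>f\<in>F. f v') = {}"
    proof (cases "(\<Inter>f\<in>F. f v) \<inter> (\<Inter>f\<in>F. f v') = {}")
      case False
      then obtain z where z: "z \<in> (\<Inter>f\<in>F. f v)" "z \<in> (\<Inter>f\<in>F. f v')" by blast
      have "le z v" "le z v'" using z f0 orn_below[OF o0] by blast+
      then have "le v v' \<or> le v' v" using tle_lin by blast
      then show ?thesis
      proof
        assume "le v v'" then show ?thesis using key[OF z(1) z(2)] by blast
      next
        assume "le v' v" then show ?thesis using key[OF z(2) z(1)] by blast
      qed
    qed simp
  qed
qed

lemma Pop_eq: "Pop V r par d = (\<lambda>v. \<Inter>f\<in>insert d {d'. orn_covered V r par d' d}. f v)"
  unfolding Pop_def by auto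

lemma orn_Pop: "orn d \<Longrightarrow> orn (Pop V r par d)"
  unfolding Pop_eq by (rule orn_int) (auto simp: orn_covered_def)

lemma Pop_sub: "Pop V r par d v \<subseteq> d v"
  unfolding Pop_def by auto

lemma orn_upd:
  assumes d: "orn d" and x: "x \<in> V" and SV: "S \<subseteq> V" and xS: "x \<in> S"
    and bel: "\<forall>a\<in>S. le a x"
    and pc: "\<forall>a b. a \<in> S \<longrightarrow> le a b \<longrightarrow> le b x \<longrightarrow> b \<in> S"
    and comp: "\<forall>y\<in>V. y \<noteq> x \<longrightarrow> d y \<subseteq> S \<or> S \<subseteq> d y \<or> S \<inter> d y = {}"
  shows "orn (d(x := S))"
proof (rule orn_intro)
  show "\<forall>v. v \<notin> V \<longrightarrow> (d(x := S)) v = {}" using d x orn_out by auto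
  show "\<forall>v\<in>V. (d(x := S)) v \<subseteq> V" using d SV orn_V by auto
  show "\<forall>v\<in>V. v \<in> (d(x := S)) v" using d xS orn_self by auto
  show "\<forall>v\<in>V. \<forall>a\<in>(d(x := S)) v. le a v" using d bel orn_below by auto
  show "\<forall>v\<in>V. \<forall>a b. a \<in> (d(x := S)) v \<longrightarrow> le a b \<longrightarrow> le b v \<longrightarrow> b \<in> (d(x := S)) v"
    using d pc orn_pc2 by auto
  show "\<forall>v\<in>V. \<forall>v'\<in>V. (d(x := S)) v \<subseteq> (d(x := S)) v' \<or> (d(x := S)) v' \<subseteq> (d(x := S)) v \<or>
    (d(x := S)) v \<inter> (d(x := S)) v' = {}"
  proof (intro ballI)
    fix v v' assume vV: "v \<in> V" "v' \<in> V"
    show "(d(x := S)) v \<subseteq> (d(x := S)) v' \<or> (d(x := S)) v' \<subseteq> (d(x := S)) v \<or>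
      (d(x := S)) v \<inter> (d(x := S)) v' = {}"
    proof (cases "v = x")
      case True
      then show ?thesis
      proof (cases "v' = x")
        case False
        then show ?thesis using comp vV True by (auto simp: Int_commute)
      qed simp
    next
      case False
      then show ?thesis
      proof (cases "v' = x")
        case True
        then show ?thesis using comp vV False by (auto simp: Int_commute)
      next
        case F2: False
        then show ?thesis using orn_nest[OF d vV] False by simp
      qed
    qed
  qed
qed

end


lemma exists_max_nat: "finite A \<Longrightarrow> A \<noteq> {} \<Longrightarrow> \<exists>m\<in>A. \<forall>a\<in>A. (f a :: nat) \<le> f m"
proof (induction A rule: finite_induct)
  case (insert x F)
  show ?case
  proof (cases "F = {}")
    case True then show ?thesis by simp
  next
    case False
    then obtain m where m: "m \<in> F" "\<forall>a\<in>F. f a \<le> f m" using insert by blast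
    show ?thesis
    proof (cases "f x \<le> f m")
      case True then show ?thesis using m by (intro bexI[of _ m]) auto
    next
      case False then show ?thesis using m by (intro bexI[of _ x]) auto
    qed
  qed
qed simp

lemma exists_min_nat: "finite A \<Longrightarrow> A \<noteq> {} \<Longrightarrow> \<exists>m\<in>A. \<forall>a\<in>A. (f m :: nat) \<le> f a"
proof (induction A rule: finite_induct)
  case (insert x F)
  show ?case
  proof (cases "F = {}")
    case True then show ?thesis by simp
  next
    case False
    then obtain m where m: "m \<in> F" "\<forall>a\<in>F. f m \<le> f a" using insert by blast
    show ?thesis
    proof (cases "f x \<le> f m")
      case True then show ?thesis using m by (intro bexI[of _ x]) auto
    next
      case False then show ?thesis using m by (intro bexI[of _ m]) auto
    qed
  qed
qed simp

context rtree
begin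

abbreviation red :: "('a \<Rightarrow> 'a set) \<Rightarrow> 'a \<Rightarrow> 'a \<Rightarrow> 'a set" where
  "red d x m \<equiv> reduction V par d x m"

lemma red_eq: "red d x m = {z \<in> d x. \<not> le z m}"
  unfolding reduction_def Delta_def by auto

lemma red_sub: "red d x m \<subseteq> d x"
  unfolding red_eq by auto

lemma wraps_mem: assumes "orn d" "wraps V d x m" shows "m \<in> d x" "m \<in> V" "x \<in> V" "m \<noteq> x" "d m \<subseteq> d x"
  using assms orn_self unfolding wraps_def by auto

lemma wraps_notin_red: assumes "orn d" "wraps V d x m" shows "m \<notin> red d x m"
  using wraps_mem[OF assms] tle_refl unfolding red_eq by auto

lemma orn_red:
  assumes d: "orn d" and w: "wraps V d x m"
  shows "orn (d(x := red d x m))"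
proof -
  note wm = wraps_mem[OF d w]
  have xV: "x \<in> V" using wm by simp
  show ?thesis
  proof (rule orn_upd[OF d xV])
    show "red d x m \<subseteq> V" using red_sub orn_V[OF d] by blast
    show "x \<in> red d x m"
    proof -
      have "\<not> le x m"
      proof
        assume "le x m"
        moreover have "le m x" using orn_below[OF d wm(1)] .
        ultimately show False using tle_antisym wm(4) by blast
      qed
      then show ?thesis unfolding red_eq using orn_self[OF d xV] by auto
    qed
    show "\<forall>a\<in>red d x m. le a x" unfolding red_eq using orn_below[OF d] by auto
    show "\<forall>a b. a \<in> red d x m \<longrightarrow> le a b \<longrightarrow> le b x \<longrightarrow> b \<in> red d x m"
      unfolding red_eq using orn_pc2[OF d] tle_trans by blast
    show "\<forall>y\<in>V. y \<noteq> x \<longrightarrow> d y \<subseteq> red d x m \<or> red d x m \<subseteq> d y \<or> red d x m \<inter> d y = {}"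
    proof (intro ballI impI)
      fix y assume yV: "y \<in> V" and yx: "y \<noteq> x"
      consider "d y \<subseteq> d x" | "d x \<subseteq> d y" | "d y \<inter> d x = {}" using orn_nest[OF d yV xV] by blast
      then show "d y \<subseteq> red d x m \<or> red d x m \<subseteq> d y \<or> red d x m \<inter> d y = {}"
      proof cases
        case 2 then show ?thesis using red_sub by blast
      next
        case 3 then show ?thesis using red_sub by blast
      next
        case 1
        show ?thesis
        proof (cases "\<exists>z\<in>d y. le z m")
          case False
          then have "d y \<subseteq> red d x m" unfolding red_eq using 1 by auto
          then show ?thesis by simp
        next
          case True
          then obtain z where z: "z \<in> d y" "le z m" by blast
          have zy: "le z y" using orn_below[OF d z(1)] .
          show ?thesis
          proof (cases "le y m")
            case True
            have "red d x m \<inter> d y = {}"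
              unfolding red_eq using orn_below[OF d] True tle_trans by blast
            then show ?thesis by simp
          next
            case False
            then have my: "le m y" using tle_lin[OF z(2) zy] by blast
            have "m \<in> d y" using orn_pc2[OF d z(1) z(2) my] .
            then have s1: "d m \<subseteq> d y" using orn_sub_mem[OF d] by blast
            have s2: "d m \<noteq> d y"
            proof
              assume "d m = d y"
              then have "y \<in> d m" using orn_self[OF d yV] by simp
              then have "le y m" using orn_below[OF d] by blast
              then show False using False by simp
            qed
            have s3: "d y \<noteq> d x"
            proof
              assume "d y = d x"
              then have "x \<in> d y" "y \<in> d x" using orn_self[OF d] xV yV by auto
              then have "x = y" using orn_below[OF d] tle_antisym by blast
              then show False using yx by simp
            qed
            have "d m \<subset> d y" "d y \<subset> d x" using s1 s2 s3 1 by auto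
            then show ?thesis using w yV unfolding wraps_def by blast
          qed
        qed
      qed
    qed
  qed
qed

lemma card_down_mono:
  assumes "le m z" "m \<noteq> z"
  shows "card {w\<in>V. le w m} < card {w\<in>V. le w z}"
proof (rule psubset_card_mono)
  show "finite {w\<in>V. le w z}" using finV by simp
  have "{w\<in>V. le w m} \<subseteq> {w\<in>V. le w z}" using assms(1) tle_trans by blast
  moreover have "z \<in> {w\<in>V. le w z}" "z \<notin> {w\<in>V. le w m}"
    using assms tle_V tle_refl tle_antisym by blast+
  ultimately show "{w\<in>V. le w m} \<subset> {w\<in>V. le w z}" by blast
qed

lemma lemmaD:
  assumes d: "orn d" and g: "orn g" and xV: "x \<in> V" and gx: "g x \<subset> d x"
    and same: "\<forall>y\<in>V. y \<noteq> x \<longrightarrow> g y = d y"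
  shows "\<exists>m. wraps V d x m \<and> g x \<subseteq> red d x m"
proof -
  let ?D = "d x - g x"
  let ?f = "\<lambda>m. card {w\<in>V. le w m}"
  have "?D \<subseteq> V" using orn_V[OF d] by blast
  then have fin: "finite ?D" using finV finite_subset by blast
  have ne: "?D \<noteq> {}" using gx by blast
  from exists_max_nat[OF fin ne, of ?f]
  obtain m where mD: "m \<in> ?D" and mmax: "\<forall>a\<in>?D. ?f a \<le> ?f m" by blast
  have mV: "m \<in> V" using mD orn_V[OF d] by blast
  have mx: "m \<noteq> x" using mD orn_self[OF g xV] by blast
  have dm: "d m \<subseteq> d x" using mD orn_sub_mem[OF d] by blast
  have "wraps V d x m"
    unfolding wraps_def
  proof (intro conjI mV xV mx dm notI)
    assume "\<exists>z\<in>V. d m \<subset> d z \<and> d z \<subset> d x"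
    then obtain z where zV: "z \<in> V" and z1: "d m \<subset> d z" and z2: "d z \<subset> d x" by blast
    have mz: "m \<in> d z" using orn_self[OF d mV] z1 by blast
    then have lmz: "le m z" using orn_below[OF d] by blast
    have zdx: "z \<in> d x" using orn_self[OF d zV] z2 by blast
    have zm: "z \<noteq> m" using z1 by blast
    have zx: "z \<noteq> x" using z2 by blast
    show False
    proof (cases "z \<in> g x")
      case False
      then have "z \<in> ?D" using zdx by blast
      then have "?f z \<le> ?f m" using mmax by blast
      moreover have "?f m < ?f z" using card_down_mono[OF lmz] zm by auto
      ultimately show False by simp
    next
      case True
      then have "g z \<subseteq> g x" using orn_sub_mem[OF g] by blast
      moreover have "g z = d z" using same zV zx by blast
      ultimately show False using mz mD by blast
    qed
  qed
  moreover have "g x \<subseteq> red d x m"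
  proof
    fix a assume a: "a \<in> g x"
    have "a \<in> d x" using a gx by blast
    moreover have "\<not> le a m"
    proof
      assume "le a m"
      then have "m \<in> g x" using orn_pc2[OF g a] orn_below[OF d] mD by blast
      then show False using mD by blast
    qed
    ultimately show "a \<in> red d x m" unfolding red_eq by blast
  qed
  ultimately show ?thesis by blast
qed


lemma orn_fin: assumes "orn d" shows "finite (d x)"
proof -
  have "d x \<subseteq> V" using orn_V[OF assms] by blast
  then show ?thesis using finV by (rule finite_subset)
qed

lemma orn_ext: "orn f \<Longrightarrow> orn g \<Longrightarrow> (\<forall>v\<in>V. f v = g v) \<Longrightarrow> f = g"
  using orn_out by (metis ext)

lemma cov_ub:
  assumes d: "orn d" and xV: "x \<in> V" and m: "m \<in> Mset V par d x"
  shows "orn_covered V r par (d(x := red d x m)) d"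
proof -
  have w: "wraps V d x m" using m unfolding Mset_def by blast
  have mx: "\<not> (\<exists>u'. wraps V d x u' \<and> red d x m \<subset> red d x u')" using m unfolding Mset_def by blast
  let ?e = "d(x := red d x m)"
  have oe: "orn ?e" using orn_red[OF d w] .
  have le1: "orn_le V ?e d" unfolding orn_le_def using red_sub by auto
  have ne: "?e \<noteq> d"
  proof
    assume "?e = d" then have "red d x m = d x" by (metis fun_upd_same)
    then show False using wraps_notin_red[OF d w] wraps_mem(1)[OF d w] by simp
  qed
  have "\<not> (\<exists>g. orn g \<and> orn_le V ?e g \<and> orn_le V g d \<and> g \<noteq> ?e \<and> g \<noteq> d)"
  proof
    assume "\<exists>g. orn g \<and> orn_le V ?e g \<and> orn_le V g d \<and> g \<noteq> ?e \<and> g \<noteq> d"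
    then obtain g where g: "orn g" "orn_le V ?e g" "orn_le V g d" "g \<noteq> ?e" "g \<noteq> d" by blast
    have same: "\<forall>y\<in>V. y \<noteq> x \<longrightarrow> g y = d y"
      using g(2,3) unfolding orn_le_def by fastforce
    have gx1: "g x \<subseteq> d x" "red d x m \<subseteq> g x" using g(2,3) xV unfolding orn_le_def by force+
    have "g x \<noteq> d x"
    proof
      assume "g x = d x" then have "\<forall>v\<in>V. g v = d v" using same by metis
      then show False using orn_ext[OF g(1) d] g(5) by blast
    qed
    then have gxd: "g x \<subset> d x" using gx1 by blast
    have "g x \<noteq> red d x m"
    proof
      assume "g x = red d x m" then have "\<forall>v\<in>V. g v = ?e v" using same by simp
      then show False using orn_ext[OF g(1) oe] g(4) by blast
    qed
    then have "red d x m \<subset> g x" using gx1 by blast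
    moreover obtain m2 where "wraps V d x m2" "g x \<subseteq> red d x m2" using lemmaD[OF d g(1) xV gxd same] by blast
    ultimately show False using mx by blast
  qed
  then show ?thesis unfolding orn_covered_def using oe d le1 ne by blast
qed

lemma cov_lb:
  assumes cov: "orn_covered V r par d' d"
  shows "\<exists>x m. x \<in> V \<and> m \<in> Mset V par d x \<and> d' = d(x := red d x m)"
proof -
  have d': "orn d'" and d: "orn d" and le: "orn_le V d' d" and ne: "d' \<noteq> d"
    and nob: "\<not> (\<exists>g. orn g \<and> orn_le V d' g \<and> orn_le V g d \<and> g \<noteq> d' \<and> g \<noteq> d)"
    using cov unfolding orn_covered_def by blast+
  let ?Ch = "{y\<in>V. d' y \<noteq> d y}"
  have fin: "finite ?Ch" using finV by simp
  have chne: "?Ch \<noteq> {}" using orn_ext[OF d' d] ne by blast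
  from exists_min_nat[OF fin chne, of "\<lambda>y. card (d y)"]
  obtain x where xCh: "x \<in> ?Ch" and xmin: "\<forall>a\<in>?Ch. card (d x) \<le> card (d a)" by blast
  have xV: "x \<in> V" using xCh by blast
  have sub: "d' x \<subseteq> d x" using le xV unfolding orn_le_def by blast
  let ?g = "d(x := d' x)"
  have og: "orn ?g"
  proof (rule orn_upd[OF d xV])
    show "d' x \<subseteq> V" using orn_V[OF d'] by blast
    show "x \<in> d' x" using orn_self[OF d' xV] .
    show "\<forall>a\<in>d' x. le a x" using orn_below[OF d'] by blast
    show "\<forall>a b. a \<in> d' x \<longrightarrow> le a b \<longrightarrow> le b x \<longrightarrow> b \<in> d' x" using orn_pc2[OF d'] by blast
    show "\<forall>y\<in>V. y \<noteq> x \<longrightarrow> d y \<subseteq> d' x \<or> d' x \<subseteq> d y \<or> d' x \<inter> d y = {}"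
    proof (intro ballI impI)
      fix y assume yV: "y \<in> V" and yx: "y \<noteq> x"
      consider "d y \<subseteq> d x" | "d x \<subseteq> d y" | "d y \<inter> d x = {}" using orn_nest[OF d yV xV] by blast
      then show "d y \<subseteq> d' x \<or> d' x \<subseteq> d y \<or> d' x \<inter> d y = {}"
      proof cases
        case 2 then show ?thesis using sub by blast
      next
        case 3 then show ?thesis using sub by blast
      next
        case 1
        have "d y \<noteq> d x"
        proof
          assume "d y = d x"
          then have "x \<in> d y" "y \<in> d x" using orn_self[OF d] xV yV by auto
          then have "x = y" using orn_below[OF d] tle_antisym by blast
          then show False using yx by simp
        qed
        then have "d y \<subset> d x" using 1 by blast
        moreover have "finite (d x)" using orn_fin[OF d] .
        ultimately have "card (d y) < card (d x)" by (simp add: psubset_card_mono)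
        then have "y \<notin> ?Ch" using xmin by force
        then have "d' y = d y" using yV by blast
        then show ?thesis using orn_nest[OF d' yV xV] by (auto simp: Int_commute)
      qed
    qed
  qed
  have "orn_le V d' ?g" using le unfolding orn_le_def by auto
  moreover have "orn_le V ?g d" using le unfolding orn_le_def by auto
  moreover have "?g \<noteq> d"
  proof
    assume "?g = d" then have "d' x = d x" by (metis fun_upd_same)
    then show False using xCh by simp
  qed
  ultimately have gd': "?g = d'" using nob og by blast
  have same: "\<forall>y\<in>V. y \<noteq> x \<longrightarrow> d' y = d y" using gd' by (metis fun_upd_other)
  have d'x: "d' x \<subset> d x" using sub xCh by blast
  obtain m where w: "wraps V d x m" and d'm: "d' x \<subseteq> red d x m"
    using lemmaD[OF d d' xV d'x same] by blast
  let ?e = "d(x := red d x m)"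
  have oe: "orn ?e" using orn_red[OF d w] .
  have "orn_le V d' ?e" using d'm same unfolding orn_le_def by auto
  moreover have "orn_le V ?e d" using red_sub unfolding orn_le_def by auto
  moreover have "?e \<noteq> d"
  proof
    assume "?e = d" then have "red d x m = d x" by (metis fun_upd_same)
    then show False using wraps_notin_red[OF d w] wraps_mem(1)[OF d w] by simp
  qed
  ultimately have ed': "?e = d'" using nob oe by blast
  have "m \<in> Mset V par d x"
    unfolding Mset_def
  proof (intro CollectI conjI w notI)
    assume "\<exists>u'. wraps V d x u' \<and> red d x m \<subset> red d x u'"
    then obtain u' where w': "wraps V d x u'" and ps: "red d x m \<subset> red d x u'" by blast
    let ?e' = "d(x := red d x u')"
    have oe': "orn ?e'" using orn_red[OF d w'] .
    have "orn_le V d' ?e'" using ed' ps unfolding orn_le_def by (metis fun_upd_apply order_refl psubset_imp_subset)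
    moreover have "orn_le V ?e' d" using red_sub unfolding orn_le_def by auto
    moreover have "?e' \<noteq> d"
    proof
      assume "?e' = d" then have "red d x u' = d x" by (metis fun_upd_same)
      then show False using wraps_notin_red[OF d w'] wraps_mem(1)[OF d w'] by simp
    qed
    moreover have "?e' \<noteq> d'"
    proof
      assume "?e' = d'" then have "red d x u' = red d x m" using ed' by (metis fun_upd_same)
      then show False using ps by simp
    qed
    ultimately show False using nob oe' by blast
  qed
  then show ?thesis using xV ed' by blast
qed

lemma wrap_exists:
  assumes d: "orn d" and vV: "v \<in> V" and zV: "z \<in> V" and zv: "z \<noteq> v" and s: "d z \<subseteq> d v"
  shows "\<exists>x. wraps V d v x \<and> d z \<subseteq> d x"
proof -
  let ?C = "{x\<in>V. d z \<subseteq> d x \<and> d x \<subset> d v}"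
  have "d z \<noteq> d v"
  proof
    assume "d z = d v"
    then have "v \<in> d z" "z \<in> d v" using orn_self[OF d] vV zV by auto
    then show False using orn_below[OF d] tle_antisym zv by blast
  qed
  then have zC: "z \<in> ?C" using zV s by blast
  have fin: "finite ?C" using finV by simp
  have ne: "?C \<noteq> {}" using zC by blast
  from exists_max_nat[OF fin ne, of "\<lambda>x. card (d x)"]
  obtain x where xC: "x \<in> ?C" and xmax: "\<forall>a\<in>?C. card (d a) \<le> card (d x)" by blast
  have "wraps V d v x"
    unfolding wraps_def
  proof (intro conjI notI)
    show "x \<in> V" "v \<in> V" "d x \<subseteq> d v" using xC vV by auto
    show "x = v \<Longrightarrow> False" using xC by blast
    assume "\<exists>y\<in>V. d x \<subset> d y \<and> d y \<subset> d v"
    then obtain y where y: "y \<in> V" "d x \<subset> d y" "d y \<subset> d v" by blast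
    then have "y \<in> ?C" using xC by blast
    then have "card (d y) \<le> card (d x)" using xmax by blast
    moreover have "finite (d y)" using orn_fin[OF d] .
    ultimately show False using y(2) psubset_card_mono by (metis leD)
  qed
  then show ?thesis using xC by blast
qed

lemma exm:
  assumes d: "orn d" and xV: "x \<in> V" and nt: "d x \<noteq> {x}"
  shows "\<exists>m. m \<in> Mset V par d x"
proof -
  obtain z where z: "z \<in> d x" "z \<noteq> x" using nt orn_self[OF d xV] by blast
  have zV: "z \<in> V" using orn_V[OF d z(1)] .
  obtain m0 where "wraps V d x m0" using wrap_exists[OF d xV zV z(2) orn_sub_mem[OF d z(1)]] by blast
  let ?W = "{m. wraps V d x m}"
  have ne: "?W \<noteq> {}" using \<open>wraps V d x m0\<close> by blast
  have "?W \<subseteq> V" unfolding wraps_def by blast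
  then have fin: "finite ?W" using finV by (rule finite_subset)
  from exists_max_nat[OF fin ne, of "\<lambda>m. card (red d x m)"]
  obtain m where mW: "m \<in> ?W" and mmax: "\<forall>a\<in>?W. card (red d x a) \<le> card (red d x m)" by blast
  have "m \<in> Mset V par d x"
    unfolding Mset_def
  proof (intro CollectI conjI notI)
    show "wraps V d x m" using mW by blast
    assume "\<exists>u'. wraps V d x u' \<and> red d x m \<subset> red d x u'"
    then obtain u' where "wraps V d x u'" "red d x m \<subset> red d x u'" by blast
    moreover have "finite (red d x u')" using finite_subset[OF red_sub orn_fin[OF d]] .
    ultimately show False using mmax psubset_card_mono by (metis leD mem_Collect_eq)
  qed
  then show ?thesis by blast
qed

lemma pop_ub:
  assumes d: "orn d" and xV: "x \<in> V" and m: "m \<in> Mset V par d x"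
  shows "Pop V r par d x \<subseteq> red d x m"
proof -
  have "orn_covered V r par (d(x := red d x m)) d" using cov_ub[OF d xV m] .
  then show ?thesis unfolding Pop_def by force
qed

lemma pop_lb:
  assumes d: "orn d" and xV: "x \<in> V" and z: "z \<in> d x"
    and nm: "\<forall>m\<in>Mset V par d x. z \<notin> Delta V par (d x) m"
  shows "z \<in> Pop V r par d x"
proof -
  have "z \<in> d' x" if c: "orn_covered V r par d' d" for d'
  proof -
    obtain y m where y: "y \<in> V" "m \<in> Mset V par d y" "d' = d(y := red d y m)"
      using cov_lb[OF c] by blast
    show ?thesis
    proof (cases "y = x")
      case True
      then show ?thesis using y nm z unfolding reduction_def by auto
    next
      case False
      then show ?thesis using y z by simp
    qed
  qed
  then show ?thesis unfolding Pop_def using z by blast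
qed

end


context rtree
begin

lemma lemW:
  assumes d: "orn d" and u: "u \<in> Mset V par d v" and z: "z \<in> d v" and zu: "le z u"
  shows "z \<in> d u"
proof (rule ccontr)
  assume nz: "z \<notin> d u"
  have w: "wraps V d v u" and mx: "\<not> (\<exists>u'. wraps V d v u' \<and> red d v u \<subset> red d v u')"
    using u unfolding Mset_def by blast+
  note wm = wraps_mem[OF d w]
  have zV: "z \<in> V" using orn_V[OF d z] .
  have zv: "z \<noteq> v"
  proof
    assume "z = v"
    then have "le v u" using zu by simp
    then show False using orn_below[OF d wm(1)] tle_antisym wm(4) by blast
  qed
  obtain x where wx: "wraps V d v x" and zx: "d z \<subseteq> d x"
    using wrap_exists[OF d wm(3) zV zv orn_sub_mem[OF d z]] by blast
  note xm = wraps_mem[OF d wx]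
  have lzx: "le z x" using orn_self[OF d zV] zx orn_below[OF d] by blast
  have zdx: "z \<in> d x" using orn_self[OF d zV] zx by blast
  consider "le x u" | "le u x" using tle_lin[OF lzx zu] by blast
  then show False
  proof cases
    case 1
    show False
    proof (cases "x = u")
      case True then show False using zdx nz by simp
    next
      case False
      have "red d v u \<subset> red d v x"
      proof -
        have "red d v u \<subseteq> red d v x" unfolding red_eq using 1 tle_trans by blast
        moreover have "u \<in> red d v x"
          unfolding red_eq using wm(1) 1 False tle_antisym by blast
        moreover have "u \<notin> red d v u" using wraps_notin_red[OF d w] .
        ultimately show ?thesis by blast
      qed
      then show False using mx wx by blast
    qed
  next
    case 2
    have xu: "x \<noteq> u"
    proof
      assume "x = u" then show False using zdx nz by simp
    qed
    have "u \<in> d x" using orn_pc2[OF d zdx zu 2] .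
    then have s1: "d u \<subseteq> d x" using orn_sub_mem[OF d] by blast
    have s2: "d u \<noteq> d x"
    proof
      assume "d u = d x"
      then have "x \<in> d u" using orn_self[OF d xm(2)] by simp
      then have "le x u" using orn_below[OF d] by blast
      then show False using 2 tle_antisym xu by blast
    qed
    have s3: "d x \<noteq> d v"
    proof
      assume "d x = d v"
      then have "v \<in> d x" using orn_self[OF d xm(3)] by simp
      then have "le v x" using orn_below[OF d] by blast
      then show False using orn_below[OF d xm(1)] tle_antisym xm(4) by blast
    qed
    have "d u \<subset> d x" "d x \<subset> d v" using s1 s2 s3 xm(5) by auto
    then show False using w xm(2) unfolding wraps_def by blast
  qed
qed

lemma P1:
  assumes d0: "orn d0" and u: "u \<in> Mset V par (Pop V r par d0) v"
  shows "Pop V r par d0 u = {u}"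
proof (rule ccontr)
  let ?d = "Pop V r par d0"
  assume ne: "?d u \<noteq> {u}"
  have d: "orn ?d" using orn_Pop[OF d0] .
  have w: "wraps V ?d v u" using u unfolding Mset_def by blast
  note wm = wraps_mem[OF d w]
  have uu: "u \<in> ?d u" using orn_self[OF d wm(2)] .
  have "d0 u \<noteq> {u}" using ne uu Pop_sub[of d0 u] by blast
  then obtain m where m: "m \<in> Mset V par d0 u" using exm[OF d0 wm(2)] by blast
  have w0: "wraps V d0 u m" using m unfolding Mset_def by blast
  note w0m = wraps_mem[OF d0 w0]
  have mu: "le m u" using orn_below[OF d0 w0m(1)] .
  have mnot: "m \<notin> ?d u" using pop_ub[OF d0 wm(2) m] wraps_notin_red[OF d0 w0] by blast
  have u0: "u \<in> d0 v" using wm(1) Pop_sub[of d0 v] by blast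
  have sub0: "d0 u \<subseteq> d0 v" using orn_sub_mem[OF d0 u0] .
  have m0v: "m \<in> d0 v" using sub0 w0m(1) by blast
  have "m \<in> ?d v"
  proof (rule pop_lb[OF d0 wm(3) m0v], intro ballI notI)
    fix m' assume m': "m' \<in> Mset V par d0 v" and mD: "m \<in> Delta V par (d0 v) m'"
    have lmm: "le m m'" using mD unfolding Delta_def by blast
    have w': "wraps V d0 v m'" using m' unfolding Mset_def by blast
    note w'm = wraps_mem[OF d0 w']
    have case1: False if "le u m'"
    proof -
      have "u \<notin> red d0 v m'" unfolding red_eq using that by blast
      then show False using pop_ub[OF d0 wm(3) m'] wm(1) by blast
    qed
    consider "le u m'" | "le m' u" using tle_lin[OF lmm mu] by blast
    then show False
    proof cases
      case 1 then show False using case1 by blast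
    next
      case 2
      show False
      proof (cases "m' = u")
        case True then show False using case1 tle_refl wm(2) by blast
      next
        case False
        have "m' \<in> d0 u" using orn_pc2[OF d0 w0m(1) lmm 2] .
        then have s1: "d0 m' \<subseteq> d0 u" using orn_sub_mem[OF d0] by blast
        have s2: "d0 m' \<noteq> d0 u"
        proof
          assume "d0 m' = d0 u"
          then have "u \<in> d0 m'" using orn_self[OF d0 wm(2)] by simp
          then have "le u m'" using orn_below[OF d0] by blast
          then show False using case1 by blast
        qed
        have s3: "d0 u \<noteq> d0 v"
        proof
          assume "d0 u = d0 v"
          then have "v \<in> d0 u" using orn_self[OF d0 wm(3)] by simp
          then have "le v u" using orn_below[OF d0] by blast
          then show False using orn_below[OF d0 u0] tle_antisym wm(4) by blast
        qed
        have "d0 m' \<subset> d0 u" "d0 u \<subset> d0 v" using s1 s2 s3 sub0 by auto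
        then show False using w' wm(2) unfolding wraps_def by blast
      qed
    qed
  qed
  then have "m \<in> ?d u" using lemW[OF d u _ mu] by blast
  then show False using mnot by blast
qed

end


theorem lemma5p2:
  fixes V :: "'a set" and r :: 'a and par :: "'a \<Rightarrow> 'a"
    and \<delta> :: "'a \<Rightarrow> 'a set" and v u :: 'a
  assumes "rooted_tree V r par"
    and "\<delta> \<in> Pop V r par ` {\<delta>0. ornamentation V r par \<delta>0}"
    and "v \<in> V"
    and "u \<in> Mset V par \<delta> v"
  shows "\<delta> u = {u} \<and>
    (\<forall>w. child V r par w v \<and> w \<in> \<delta> v \<and> u \<in> Delta V par (\<delta> v) w \<longrightarrow>
       (\<forall>k::nat. k \<ge> 1 \<and> w \<in> ((Pop V r par) ^^ k) \<delta> v \<longrightarrow>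
          is_bead V r par (((Pop V r par) ^^ k) \<delta>) v w {u}))"
proof -
  interpret T: rtree V r par using assms(1) by (unfold_locales)
  obtain d0 where d0: "ornamentation V r par d0" and dd: "\<delta> = Pop V r par d0"
    using assms(2) by blast
  have d: "ornamentation V r par \<delta>" using T.orn_Pop[OF d0] dd by simp
  have part1: "\<delta> u = {u}" using T.P1[OF d0] assms(4) dd by simp
  have w: "wraps V \<delta> v u" and mx: "\<not> (\<exists>u'. wraps V \<delta> v u' \<and> reduction V par \<delta> v u \<subset> reduction V par \<delta> v u')"
    using assms(4) unfolding Mset_def by blast+
  note wm = T.wraps_mem[OF d w]
  let ?s = "\<lambda>k. ((Pop V r par) ^^ k) \<delta>"
  have os: "ornamentation V r par (?s k)" for k
    by (induction k) (auto simp: d T.orn_Pop)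
  have sS: "?s (Suc k) = Pop V r par (?s k)" for k by simp
  have sub0: "?s k y \<subseteq> \<delta> y" for k y
  proof (induction k)
    case (Suc k) then show ?case using T.Pop_sub[of "?s k" y] by auto
  qed simp
  have sub1: "?s (Suc k) y \<subseteq> ?s 1 y" for k y
  proof (induction k)
    case (Suc k) then show ?case using T.Pop_sub[of "?s (Suc k)" y] by auto
  qed simp
  have singl: "?s k u = {u}" for k
    using sub0[of k u] part1 T.orn_self[OF os wm(2)] by blast
  show ?thesis
  proof (intro conjI part1 allI impI)
    fix w k
    assume hw: "child V r par w v \<and> w \<in> \<delta> v \<and> u \<in> Delta V par (\<delta> v) w"
      and hk: "1 \<le> k \<and> w \<in> ?s k v"
    have cw: "child V r par w v" and uw: "T.le u w" and udv: "u \<in> \<delta> v"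
      using hw unfolding Delta_def by auto
    have wV: "w \<in> V" and pw: "par w = v" using cw unfolding child_def by auto
    have wv: "T.le w v" using T.tle_par[OF wV] pw by simp
    obtain n where kn: "k = Suc n" using hk by (cases k) auto
    have claim: "\<forall>y. T.le u y \<and> T.le y w \<longrightarrow> y \<in> ?s (Suc n) v \<or> ?s (Suc n) y = {y}"
      if "w \<in> ?s (Suc n) v" for n
      using that
    proof (induction n)
      case 0
      show ?case
      proof (intro allI impI)
        fix y assume y: "T.le u y \<and> T.le y w"
        show "y \<in> ?s (Suc 0) v \<or> ?s (Suc 0) y = {y}"
        proof (cases "y = u")
          case True then show ?thesis using singl[of 1] by simp
        next
          case False
          have ydv: "y \<in> \<delta> v" using T.orn_pc2[OF d udv] y T.tle_trans[OF _ wv] by blast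
          have "y \<in> Pop V r par \<delta> v"
          proof (rule T.pop_lb[OF d assms(3) ydv], intro ballI notI)
            fix m assume m: "m \<in> Mset V par \<delta> v" and ym: "y \<in> Delta V par (\<delta> v) m"
            have lym: "T.le y m" using ym unfolding Delta_def by blast
            have wmm: "wraps V \<delta> v m" using m unfolding Mset_def by blast
            have mxm: "\<not> (\<exists>u'. wraps V \<delta> v u' \<and> reduction V par \<delta> v m \<subset> reduction V par \<delta> v u')"
              using m unfolding Mset_def by blast
            have lum: "T.le u m" using y lym T.tle_trans by blast
            have "reduction V par \<delta> v m \<subseteq> reduction V par \<delta> v u"
              unfolding T.red_eq using T.tle_trans[OF _ lum] by blast
            moreover have "y \<in> reduction V par \<delta> v u"
              unfolding T.red_eq using ydv y False T.tle_antisym by blast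
            moreover have "y \<notin> reduction V par \<delta> v m"
              unfolding T.red_eq using lym by blast
            ultimately show False using mxm w by blast
          qed
          then show ?thesis by simp
        qed
      qed
    next
      case (Suc n)
      have wprev: "w \<in> ?s (Suc n) v" using Suc.prems T.Pop_sub[of "?s (Suc n)" v] by auto
      note IH = Suc.IH[OF wprev]
      show ?case
      proof (intro allI impI)
        fix y assume y: "T.le u y \<and> T.le y w"
        have yV: "y \<in> V" using y T.tle_V by blast
        let ?t = "?s (Suc n)"
        have ot: "ornamentation V r par ?t" using os .
        have tri: "?s (Suc (Suc n)) y = {y}" if "?t y = {y}"
          using that T.Pop_sub[of ?t y] T.orn_self[OF os yV, of "Suc (Suc n)"] by auto
        show "y \<in> ?s (Suc (Suc n)) v \<or> ?s (Suc (Suc n)) y = {y}"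
        proof (cases "?t y = {y}")
          case True then show ?thesis using tri by blast
        next
          case False
          then have ytv: "y \<in> ?t v" using IH y by blast
          show ?thesis
          proof (cases "y \<in> ?s (Suc (Suc n)) v")
            case True then show ?thesis by simp
          next
            case nin: False
            have "\<exists>m\<in>Mset V par ?t v. y \<in> Delta V par (?t v) m"
              using T.pop_lb[OF ot assms(3) ytv] nin by auto
            then obtain m where m: "m \<in> Mset V par ?t v" and ym: "y \<in> Delta V par (?t v) m" by blast
            have teq: "?t = Pop V r par (?s n)" by simp
            have "?t m = {m}" using T.P1[OF os, of m n v] m teq by simp
            moreover have "y \<in> ?t m" using T.lemW[OF ot m ytv] ym unfolding Delta_def by blast
            ultimately have "y = m" by blast
            then have "?t y = {y}" using \<open>?t m = {m}\<close> by simp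
            then show ?thesis using False by blast
          qed
        qed
      qed
    qed
    have cl: "\<forall>y. T.le u y \<and> T.le y w \<longrightarrow> y \<in> ?s k v \<or> ?s k y = {y}"
      using claim[of n] hk kn by simp
    have unot: "u \<notin> ?s k v"
    proof
      assume "u \<in> ?s k v"
      then have "u \<in> Pop V r par \<delta> v" using sub1[of n v] kn by auto
      then show False using T.pop_ub[OF d assms(3) assms(4)] T.wraps_notin_red[OF d w] by blast
    qed
    show "is_bead V r par (?s k) v w {u}"
      unfolding is_bead_def
      using cw hk wm(2) singl[of k] uw unot cl by auto
  qed
qed

end
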